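(* Let $a<b$, $n\ge 1$, $h=(b-a)/n$, $x_k=a+kh$, and let $S^n_{5,1}$ and the Gaussian quadrature rule be as in the context. Then for every $k=1,\dots,n$ the open interval $J_k=(x_{k-1},x_k)$ contains at least two nodes of the Gaussian quadrature rule.
   Context: $S^n_{5,1}=\{f\in C^1[a,b]:\ f|_{(x_{k-1},x_k)}\text{ is a polynomial of degree}\le 5,\ k=1,\dots,n\}$; it has dimension $4n+2$. A Gaussian quadrature rule for $S^n_{5,1}$ is a rule $f\mapsto\sum_{i=1}^{2n+1}\omega_i f(\tau_i)$ with $2n+1$ distinct nodes $\tau_i\in[a,b]$ and positive weights $\omega_i>0$ such that $\int_a^b f(t)\,dt=\sum_{i=1}^{2n+1}\omega_i f(\tau_i)$ for every $f\in S^n_{5,1}$ (by a result of Micchelli and Pinkus, $2n+1$ is the minimal number of nodes of a rule exact on $S^n_{5,1}$, and such a rule exists). *)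

theory Defs
  imports "HOL-Analysis.Analysis" "HOL-Computational_Algebra.Polynomial"
begin

definition knot :: "real \<Rightarrow> real \<Rightarrow> nat \<Rightarrow> nat \<Rightarrow> real" where
  "knot a b n k = a + real k * ((b - a) / real n)"

definition C1_on :: "real \<Rightarrow> real \<Rightarrow> (real \<Rightarrow> real) \<Rightarrow> bool" where
  "C1_on a b f \<longleftrightarrow> (\<exists>f'. (\<forall>x\<in>{a..b}. (f has_real_derivative f' x) (at x within {a..b}))
                         \<and> continuous_on {a..b} f')"

definition spline51 :: "real \<Rightarrow> real \<Rightarrow> nat \<Rightarrow> (real \<Rightarrow> real) set" where
  "spline51 a b n = {f. C1_on a b f \<and>
     (\<forall>k\<in>{1..n}. \<exists>p :: real poly. degree p \<le> 5 \<and>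
        (\<forall>x\<in>{knot a b n (k - 1)<..<knot a b n k}. f x = poly p x))}"

definition gaussian_rule51 :: "real \<Rightarrow> real \<Rightarrow> nat \<Rightarrow> (nat \<Rightarrow> real) \<Rightarrow> (nat \<Rightarrow> real) \<Rightarrow> bool" where
  "gaussian_rule51 a b n \<tau> \<omega> \<longleftrightarrow>
     inj_on \<tau> {..<2*n+1} \<and>
     (\<forall>i<2*n+1. \<tau> i \<in> {a..b} \<and> \<omega> i > 0) \<and>
     (\<forall>f\<in>spline51 a b n. integral {a..b} f = (\<Sum>i<2*n+1. \<omega> i * f (\<tau> i)))"

end

theory Submission
  imports Defs
begin


definition H :: "real \<Rightarrow> (real \<Rightarrow> real) \<Rightarrow> real \<Rightarrow> real" where
  "H c g t = (if t \<in> {c..} then g t else 0)"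

lemma H_deriv:
  assumes g: "\<And>x. (g has_real_derivative g' x) (at x)" and z: "g c = 0" "g' c = 0"
  shows "(H c g has_real_derivative H c g' t) (at t)"
proof -
  have "((\<lambda>x. if x \<in> {c..} then g x else (\<lambda>_. 0) x) has_vector_derivative
    (if t \<in> {c..} then g' t else (\<lambda>_. 0::real) t)) (at t within UNIV)"
  proof (rule has_vector_derivative_If_within_closures[where T="{..<c}"])
    show "t \<in> {c..} \<union> {..<c}" by auto
    show "UNIV = {c..} \<union> {..<c}" by auto
    show "(g has_vector_derivative g' x) (at x within {c..} \<union> (closure {c..} \<inter> closure {..<c}))" for x
      using g[of x] unfolding has_real_derivative_iff_has_vector_derivative[symmetric]
      by (rule has_field_derivative_at_within)
    show "((\<lambda>_. 0) has_vector_derivative 0) (at x within {..<c} \<union> (closure {c..} \<inter> closure {..<c}))" for x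
      by (rule has_vector_derivative_const)
    show "g x = 0" if "x \<in> closure {c..}" "x \<in> closure {..<c}" for x
      using that z by simp
    show "g' x = 0" if "x \<in> closure {c..}" "x \<in> closure {..<c}" for x
      using that z by simp
  qed
  then show ?thesis unfolding H_def
    by (simp add: has_real_derivative_iff_has_vector_derivative)
qed

lemma H_cont:
  assumes "continuous_on UNIV g" "g c = 0"
  shows "continuous_on S (H c g)"
proof -
  have e: "H c g = (\<lambda>t. g (max c t))" using assms(2) by (auto simp: H_def fun_eq_iff max_def)
  have "continuous_on S (\<lambda>t. max c t)" by (intro continuous_intros)
  then have "continuous_on S (\<lambda>t. g (max c t))"
    using continuous_on_compose2[OF assms(1)] by auto
  then show ?thesis using e by simp
qed




lemma knot_mono: "a < b \<Longrightarrow> n \<ge> 1 \<Longrightarrow> (knot a b n i \<le> knot a b n j) = (i \<le> j)"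
proof -
  assume "a < b" "n \<ge> 1"
  then have h: "(b - a) / real n > 0" by auto
  show ?thesis unfolding knot_def using mult_le_cancel_right_pos[OF h, of "real i" "real j"] by simp
qed

lemma HL_deriv:
  assumes "\<And>c P. (c,P) \<in> set L \<Longrightarrow> poly P c = 0 \<and> poly (pderiv P) c = 0"
  shows "((\<lambda>t. (\<Sum>(c,P)\<leftarrow>L. H c (poly P) t)) has_real_derivative
          (\<Sum>(c,P)\<leftarrow>L. H c (poly (pderiv P)) t)) (at t)"
  using assms
proof (induction L)
  case Nil then show ?case by simp
next
  case (Cons cp L)
  obtain c P where cp: "cp = (c,P)" by fastforce
  have "(H c (poly P) has_real_derivative H c (poly (pderiv P)) t) (at t)"
    using Cons.prems[of c P] cp by (intro H_deriv) (auto intro: poly_DERIV)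
  then show ?case using Cons cp by (auto intro!: derivative_eq_intros)
qed

lemma HL_cont:
  assumes "\<And>c P. (c,P) \<in> set L \<Longrightarrow> poly (F P) c = 0"
  shows "continuous_on S (\<lambda>t. (\<Sum>(c,P)\<leftarrow>L. H c (poly (F P)) t))"
  using assms
proof (induction L)
  case Nil then show ?case by simp
next
  case (Cons cp L)
  obtain c P where cp: "cp = (c,P)" by fastforce
  have "continuous_on S (H c (poly (F P)))"
    using Cons.prems[of c P] cp by (intro H_cont) (auto intro: continuous_intros)
  then show ?case using Cons cp by (auto intro!: continuous_intros)
qed

lemma HL_piece:
  assumes ab: "a < b" "n \<ge> 1" and i: "i \<in> {1..n}"
    and L: "\<And>c P. (c,P) \<in> set L \<Longrightarrow> degree P \<le> 5 \<and> (\<exists>j\<le>n. c = knot a b n j)"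
  shows "\<exists>p. degree p \<le> 5 \<and> (\<forall>x\<in>{knot a b n (i - 1)<..<knot a b n i}.
            (\<Sum>(c,P)\<leftarrow>L. H c (poly P) x) = poly p x)"
  using L
proof (induction L)
  case Nil then show ?case by (auto intro: exI[of _ 0])
next
  case (Cons cp L)
  obtain c P where cp: "cp = (c,P)" by fastforce
  from Cons obtain p where p: "degree p \<le> 5" "\<forall>x\<in>{knot a b n (i - 1)<..<knot a b n i}.
            (\<Sum>(c,P)\<leftarrow>L. H c (poly P) x) = poly p x" by auto
  from Cons.prems[of c P] cp obtain j where j: "j \<le> n" "c = knot a b n j" "degree P \<le> 5" by auto
  show ?case
  proof (cases "j \<le> i - 1")
    case True
    have "\<forall>x\<in>{knot a b n (i - 1)<..<knot a b n i}. H c (poly P) x = poly P x"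
      using knot_mono[OF ab, of j "i - 1"] True j by (auto simp: H_def)
    then show ?thesis using p j cp
      by (intro exI[of _ "P + p"]) (auto intro: order.trans[OF degree_add_le_max])
  next
    case False
    then have "i \<le> j" by auto
    have "\<forall>x\<in>{knot a b n (i - 1)<..<knot a b n i}. H c (poly P) x = 0"
      using knot_mono[OF ab, of i j] \<open>i \<le> j\<close> j by (auto simp: H_def)
    then show ?thesis using p j cp by (intro exI[of _ p]) auto
  qed
qed

lemma spline_mem:
  assumes ab: "a < b" "n \<ge> 1" and P0: "degree P0 \<le> 5"
    and L: "\<And>c P. (c,P) \<in> set L \<Longrightarrow> poly P c = 0 \<and> poly (pderiv P) c = 0 \<and> degree P \<le> 5 \<and> (\<exists>j\<le>n. c = knot a b n j)"
  shows "(\<lambda>t. poly P0 t + (\<Sum>(c,P)\<leftarrow>L. H c (poly P) t)) \<in> spline51 a b n"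
proof -
  let ?f' = "\<lambda>t. poly (pderiv P0) t + (\<Sum>(c,P)\<leftarrow>L. H c (poly (pderiv P)) t)"
  have d: "((\<lambda>t. poly P0 t + (\<Sum>(c,P)\<leftarrow>L. H c (poly P) t)) has_real_derivative ?f' t) (at t)" for t
    using HL_deriv[of L t] L by (auto intro!: derivative_eq_intros poly_DERIV)
  have c: "continuous_on {a..b} ?f'"
    using HL_cont[of L pderiv "{a..b}"] L
    by (intro continuous_intros) auto
  have C1: "C1_on a b (\<lambda>t. poly P0 t + (\<Sum>(c,P)\<leftarrow>L. H c (poly P) t))"
    unfolding C1_on_def using d c by (intro exI[of _ ?f']) (auto intro: has_field_derivative_at_within)
  show ?thesis unfolding spline51_def
  proof (intro CollectI conjI C1 ballI)
    fix i assume i: "i \<in> {1..n}"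
    obtain p where p: "degree p \<le> 5" "\<forall>x\<in>{knot a b n (i - 1)<..<knot a b n i}.
            (\<Sum>(c,P)\<leftarrow>L. H c (poly P) x) = poly p x"
      using HL_piece[OF ab i, of L] L by blast
    show "\<exists>p. degree p \<le> 5 \<and> (\<forall>x\<in>{knot a b n (i - 1)<..<knot a b n i}.
        poly P0 x + (\<Sum>(c,P)\<leftarrow>L. H c (poly P) x) = poly p x)"
      using p P0 by (intro exI[of _ "P0 + p"]) (auto intro: order.trans[OF degree_add_le_max])
  qed
qed




definition sc :: "real \<Rightarrow> real \<Rightarrow> real poly \<Rightarrow> real poly" where
  "sc h c p = pcompose p [:-c/h, 1/h:]"

lemma poly_sc: "h \<noteq> 0 \<Longrightarrow> poly (sc h c p) t = poly p ((t - c) / h)"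
  by (simp add: sc_def poly_pcompose field_simps)

lemma pderiv_sc: "h \<noteq> 0 \<Longrightarrow> poly (pderiv (sc h c p)) t = poly (pderiv p) ((t - c) / h) / h"
  by (simp add: sc_def pderiv_pcompose poly_pcompose field_simps pderiv_pCons)

lemma degree_sc: "degree (sc h c p) \<le> degree p"
  unfolding sc_def by (simp add: degree_pcompose)

lemma int_sc:
  assumes h: "h > 0" and F: "\<And>s. (F has_real_derivative poly p s) (at s)"
  shows "((\<lambda>t. poly (sc h c p) t) has_integral h * (F 1 - F 0)) {c..c+h}"
proof -
  have d: "((\<lambda>t. h * F ((t - c) / h)) has_real_derivative poly (sc h c p) t) (at t)" for t
  proof -
    have l: "((\<lambda>t. (t - c) / h) has_real_derivative 1 / h) (at t)"
      using h by (auto intro!: derivative_eq_intros simp: field_simps)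
    have "((\<lambda>t. h * F ((t - c) / h)) has_real_derivative h * (poly p ((t - c) / h) * (1 / h))) (at t)"
      by (intro DERIV_cmult DERIV_chain2[OF F l])
    then show ?thesis using h by (simp add: poly_sc)
  qed
  have "((\<lambda>t. poly (sc h c p) t) has_integral (h * F ((c + h - c) / h) - h * F ((c - c) / h))) {c..c+h}"
    by (rule fundamental_theorem_of_calculus)
       (use h d in \<open>auto simp: has_real_derivative_iff_has_vector_derivative[symmetric] intro: has_field_derivative_at_within\<close>)
  then show ?thesis using h by (simp add: right_diff_distrib)
qed









definition "gM = [:0,0,-1/2,2,-5/2,1::real:]"
definition "gL = [:0,1/4,-3/2,13/4,-3,1::real:]"
definition "gR = [:0,0,1/4,-5/4,2,-1::real:]"
definition "g2 = [:0,1/4,-5/4,2,-1::real:]"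

lemma poly_gM: "poly gM s = s^2 * (1-s)^2 * (s - 1/2)"
  by (simp add: gM_def eval_nat_numeral algebra_simps)
lemma poly_gL: "poly gL s = s * (1-s)^2 * (s - 1/2)^2"
  by (simp add: gL_def eval_nat_numeral algebra_simps)
lemma poly_gR: "poly gR s = s^2 * (1-s) * (s - 1/2)^2"
  by (simp add: gR_def eval_nat_numeral algebra_simps)
lemma poly_g2: "poly g2 s = s * (1-s) * (s - 1/2)^2"
  by (simp add: g2_def power2_eq_square field_simps)

lemma deg_gM: "degree gM \<le> 5" by (simp add: gM_def)
lemma deg_gL: "degree gL \<le> 5" by (simp add: gL_def)
lemma deg_gR: "degree gR \<le> 5" by (simp add: gR_def)
lemma deg_g2: "degree g2 \<le> 5" by (simp add: g2_def)
lemma gM_vals: "poly gM 0 = 0" "poly gM 1 = 0" "poly (pderiv gM) 0 = 0" "poly (pderiv gM) 1 = 0"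
  by (simp_all add: gM_def pderiv_pCons)
lemma gL_vals: "poly gL 0 = 0" "poly gL 1 = 0" "poly (pderiv gL) 1 = 0" "poly (pderiv gL) 0 = 1/4"
  by (simp_all add: gL_def pderiv_pCons)
lemma gR_vals: "poly gR 0 = 0" "poly gR 1 = 0" "poly (pderiv gR) 0 = 0" "poly (pderiv gR) 1 = -1/4"
  by (simp_all add: gR_def pderiv_pCons)
lemma g2_vals: "poly g2 0 = 0" "poly g2 1 = 0" "poly (pderiv g2) 0 = 1/4" "poly (pderiv g2) 1 = -1/4"
  by (simp_all add: g2_def pderiv_pCons)




lemma int_gM: assumes "h > 0" shows "((\<lambda>t. poly (sc h c gM) t) has_integral 0) {c..c+h}"
proof -
  define A :: "real \<Rightarrow> real" where "A = (\<lambda>s. - (s^3/6) + s^4/2 - s^5/2 + s^6/6)"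
  have "((\<lambda>t. poly (sc h c gM) t) has_integral h * (A 1 - A 0)) {c..c+h}"
    apply (rule int_sc[OF assms])
    unfolding A_def
    apply (rule derivative_eq_intros refl | simp)+
    by (simp add: gM_def eval_nat_numeral algebra_simps)
  then show ?thesis by (simp add: A_def)
qed



lemma int_gL: assumes "h > 0" shows "((\<lambda>t. poly (sc h c gL) t) has_integral h/240) {c..c+h}"
proof -
  define A :: "real \<Rightarrow> real" where "A = (\<lambda>s. s^2/8 - s^3/2 + 13/16* s^4 - 3/5* s^5 + s^6/6)"
  have "((\<lambda>t. poly (sc h c gL) t) has_integral h * (A 1 - A 0)) {c..c+h}"
    apply (rule int_sc[OF assms])
    unfolding A_def
    apply (rule derivative_eq_intros refl | simp)+
    by (simp add: gL_def eval_nat_numeral algebra_simps)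
  then show ?thesis by (simp add: A_def)
qed

lemma int_gR: assumes "h > 0" shows "((\<lambda>t. poly (sc h c gR) t) has_integral h/240) {c..c+h}"
proof -
  define A :: "real \<Rightarrow> real" where "A = (\<lambda>s. s^3/12 - 5/16* s^4 + 2/5* s^5 - s^6/6)"
  have "((\<lambda>t. poly (sc h c gR) t) has_integral h * (A 1 - A 0)) {c..c+h}"
    apply (rule int_sc[OF assms])
    unfolding A_def
    apply (rule derivative_eq_intros refl | simp)+
    by (simp add: gR_def eval_nat_numeral algebra_simps)
  then show ?thesis by (simp add: A_def)
qed

lemma int_g2: assumes "h > 0" shows "((\<lambda>t. poly (sc h c g2) t) has_integral h/120) {c..c+h}"
proof -
  define A :: "real \<Rightarrow> real" where "A = (\<lambda>s. s^2/8 - 5/12* s^3 + s^4/2 - s^5/5)"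
  have "((\<lambda>t. poly (sc h c g2) t) has_integral h * (A 1 - A 0)) {c..c+h}"
    apply (rule int_sc[OF assms])
    unfolding A_def
    apply (rule derivative_eq_intros refl | simp)+
    by (simp add: g2_def eval_nat_numeral algebra_simps)
  then show ?thesis by (simp add: A_def)
qed




lemma int_piece:
  fixes a b c d :: real
  assumes "a \<le> c" "c \<le> d" "d \<le> b" "(g has_integral I) {c..d}"
    "\<forall>t\<in>{a..c}. f t = 0" "\<forall>t\<in>{c..d}. f t = g t" "\<forall>t\<in>{d..b}. f t = (0::real)"
  shows "(f has_integral I) {a..b}"
proof -
  have 1: "(f has_integral 0) {a..c}" using assms has_integral_cong[of "{a..c}" f "\<lambda>_. 0"] by auto
  have 2: "(f has_integral I) {c..d}" using assms has_integral_cong[of "{c..d}" f g] by auto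
  have 3: "(f has_integral 0) {d..b}" using assms has_integral_cong[of "{d..b}" f "\<lambda>_. 0"] by auto
  have "(f has_integral 0 + I) {a..d}" using has_integral_combine[OF _ _ 1 2] assms by auto
  then have "(f has_integral 0 + I + 0) {a..b}" using has_integral_combine[OF _ _ _ 3] assms by auto
  then show ?thesis by simp
qed

lemma sum_single:
  fixes g :: "nat \<Rightarrow> real"
  assumes "i0 < N" "\<forall>i<N. i \<noteq> i0 \<longrightarrow> g i = 0"
  shows "(\<Sum>i<N. g i) = g i0"
proof -
  have "(\<Sum>i<N. g i) = g i0 + (\<Sum>i\<in>{..<N} - {i0}. g i)"
    using assms(1) by (simp add: sum.remove)
  also have "(\<Sum>i\<in>{..<N} - {i0}. g i) = 0" using assms(2) by (intro sum.neutral) auto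
  finally show ?thesis by simp
qed

locale GR =
  fixes a b :: real and n :: nat and \<tau> \<omega> :: "nat \<Rightarrow> real"
  assumes ab: "a < b" and n1: "n \<ge> 1" and GR: "gaussian_rule51 a b n \<tau> \<omega>"
begin

definition "hh = (b - a) / real n"

lemma hh_pos: "hh > 0" using ab n1 by (simp add: hh_def)

lemma knot_eq: "knot a b n i = a + real i * hh" by (simp add: knot_def hh_def)

lemma knot_n: "knot a b n n = b" using n1 by (simp add: knot_def)

lemma exact: "f \<in> spline51 a b n \<Longrightarrow> integral {a..b} f = (\<Sum>i<2*n+1. \<omega> i * f (\<tau> i))"
  using GR by (simp add: gaussian_rule51_def)

lemma nodes: "i < 2*n+1 \<Longrightarrow> \<tau> i \<in> {a..b} \<and> \<omega> i > 0"
  using GR by (simp add: gaussian_rule51_def)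

lemma inj: "inj_on \<tau> {..<2*n+1}"
  using GR by (simp add: gaussian_rule51_def)

definition good :: "nat \<Rightarrow> bool" where
  "good j = (\<forall>i<2*n+1. \<tau> i \<in> {knot a b n (j - 1)<..<knot a b n j} \<longrightarrow> \<tau> i = knot a b n (j - 1) + hh/2)"

lemma mid:
  assumes j: "j \<in> {1..n}" and card: "card {i. i < 2*n+1 \<and> \<tau> i \<in> {knot a b n (j - 1)<..<knot a b n j}} \<le> 1"
  shows "good j"
  unfolding good_def
proof (intro allI impI)
  fix i0 assume i0: "i0 < 2*n+1" "\<tau> i0 \<in> {knot a b n (j - 1)<..<knot a b n j}"
  define c where "c = knot a b n (j - 1)"
  have cj: "knot a b n j = c + hh" using j unfolding c_def knot_eq by (auto simp: of_nat_diff algebra_simps)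
  have ca: "a \<le> c" unfolding c_def knot_eq using hh_pos by simp
  have cb: "c + hh \<le> b" using cj knot_mono[OF ab n1, of j n] j knot_n by auto
  define P where "P = sc hh c gM"
  have hz: "hh \<noteq> 0" using hh_pos by simp
  define f where "f = (\<lambda>t. poly 0 t + (\<Sum>(c,P)\<leftarrow>[(c, P), (c+hh, -P)]. H c (poly P) t))"
  have fs: "f \<in> spline51 a b n" unfolding f_def
  proof (rule spline_mem[OF ab n1])
    fix c' P' assume "(c', P') \<in> set [(c, P), (c+hh, -P)]"
    then consider "c' = c" "P' = P" | "c' = c + hh" "P' = - P" by auto
    then show "poly P' c' = 0 \<and> poly (pderiv P') c' = 0 \<and> degree P' \<le> 5 \<and> (\<exists>j\<le>n. c' = knot a b n j)"
    proof cases
      case 1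
      then show ?thesis
        using hz gM_vals j deg_gM degree_sc[of hh c gM] unfolding P_def
        by (auto simp: poly_sc pderiv_sc c_def intro!: exI[of _ "j - 1"])
    next
      case 2
      then show ?thesis
        using hz gM_vals j deg_gM degree_sc[of hh c gM] cj unfolding P_def
        by (auto simp: poly_sc pderiv_sc pderiv_minus intro!: exI[of _ j])
    qed
  qed simp
  have fform: "f t = (if c < t \<and> t < c + hh then poly gM ((t - c)/hh) else 0)" for t
    using hz hh_pos gM_vals unfolding f_def P_def by (auto simp: H_def poly_sc)
  have "(f has_integral 0) {a..b}"
  proof (rule int_piece[OF ca _ cb int_gM[OF hh_pos]])
    show "\<forall>t\<in>{a..c}. f t = 0" using fform by auto
    show "\<forall>t\<in>{c..c+hh}. f t = poly (sc hh c gM) t" using fform hz gM_vals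
      by (auto simp: poly_sc)
    show "\<forall>t\<in>{c+hh..b}. f t = 0" using fform by auto
  qed (use hh_pos in auto)
  then have "(\<Sum>i<2*n+1. \<omega> i * f (\<tau> i)) = 0" using exact[OF fs] by (simp add: integral_unique)
  moreover have "(\<Sum>i<2*n+1. \<omega> i * f (\<tau> i)) = \<omega> i0 * f (\<tau> i0)"
  proof (rule sum_single[OF i0(1)], intro allI impI)
    fix i assume i: "i < 2*n+1" "i \<noteq> i0"
    have fin: "finite {i. i < 2*n+1 \<and> \<tau> i \<in> {knot a b n (j - 1)<..<knot a b n j}}" by simp
    have "\<tau> i \<notin> {knot a b n (j - 1)<..<knot a b n j}"
    proof
      assume "\<tau> i \<in> {knot a b n (j - 1)<..<knot a b n j}"
      then have "{i, i0} \<subseteq> {i. i < 2*n+1 \<and> \<tau> i \<in> {knot a b n (j - 1)<..<knot a b n j}}"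
        using i i0 by auto
      from card_mono[OF fin this] card i show False by auto
    qed
    then show "\<omega> i * f (\<tau> i) = 0" using fform cj by (auto simp: c_def)
  qed
  ultimately have "f (\<tau> i0) = 0" using nodes[OF i0(1)] by simp
  then have z: "poly gM ((\<tau> i0 - c)/hh) = 0" using fform i0 cj by (auto simp: c_def)
  define s where "s = (\<tau> i0 - c)/hh"
  have s01: "0 < s" "s < 1" using i0 cj hh_pos by (auto simp: s_def c_def field_simps)
  have "s = 1/2" using z s01 by (simp add: poly_gM s_def[symmetric])
  then show "\<tau> i0 = knot a b n (j - 1) + hh/2" using hz by (simp add: s_def c_def field_simps)
qed

end



lemma gR_nonneg: "0 \<le> s \<Longrightarrow> s \<le> 1 \<Longrightarrow> poly gR s \<ge> 0"
  by (simp add: poly_gR)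
lemma gL_nonneg: "0 \<le> s \<Longrightarrow> s \<le> 1 \<Longrightarrow> poly gL s \<ge> 0"
  by (simp add: poly_gL)

context GR begin

lemma hz: "hh \<noteq> 0" using hh_pos by simp

lemma knot_le_b: "i \<le> n \<Longrightarrow> knot a b n i \<le> b"
  using knot_mono[OF ab n1, of i n] knot_n by simp

lemma left_end: assumes g1: "good 1" shows False
proof -
  define P where "P = sc hh a gL"
  define f where "f = (\<lambda>t. poly P t + (\<Sum>(c,P)\<leftarrow>[(a+hh, -P)]. H c (poly P) t))"
  have k1: "knot a b n 1 = a + hh" by (simp add: knot_eq)
  have fs: "f \<in> spline51 a b n" unfolding f_def
  proof (rule spline_mem[OF ab n1])
    show "degree P \<le> 5" using deg_gL degree_sc[of hh a gL] unfolding P_def by simp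
    fix c' P' assume "(c', P') \<in> set [(a+hh, -P)]"
    then show "poly P' c' = 0 \<and> poly (pderiv P') c' = 0 \<and> degree P' \<le> 5 \<and> (\<exists>j\<le>n. c' = knot a b n j)"
      using hz gL_vals deg_gL degree_sc[of hh a gL] k1 n1 unfolding P_def
      by (auto simp: poly_sc pderiv_sc pderiv_minus intro!: exI[of _ 1])
  qed
  have fform: "f t = (if t < a + hh then poly gL ((t - a)/hh) else 0)" for t
    using hz hh_pos unfolding f_def P_def by (auto simp: H_def poly_sc)
  have ab1: "a + hh \<le> b" using knot_le_b[of 1] n1 k1 by simp
  have "(f has_integral hh/240) {a..b}"
  proof (rule int_piece[OF _ _ ab1 int_gL[OF hh_pos]])
    show "\<forall>t\<in>{a..a}. f t = 0" using fform gL_vals hh_pos by auto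
    show "\<forall>t\<in>{a..a+hh}. f t = poly (sc hh a gL) t" using fform hz gL_vals
      by (auto simp: poly_sc)
    show "\<forall>t\<in>{a+hh..b}. f t = 0" using fform by auto
  qed (use hh_pos in auto)
  then have "(\<Sum>i<2*n+1. \<omega> i * f (\<tau> i)) = hh/240" using exact[OF fs] by (simp add: integral_unique)
  moreover have "(\<Sum>i<2*n+1. \<omega> i * f (\<tau> i)) = 0"
  proof (intro sum.neutral ballI)
    fix i assume "i \<in> {..<2*n+1}"
    then have i: "i < 2*n+1" by simp
    have "f (\<tau> i) = 0"
    proof (cases "\<tau> i < a + hh")
      case True
      show ?thesis
      proof (cases "\<tau> i = a")
        case True then show ?thesis using fform gL_vals hh_pos by simp
      next
        case False
        then have "\<tau> i \<in> {knot a b n (1 - 1)<..<knot a b n 1}"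
          using nodes[OF i] True k1 by (auto simp: knot_eq)
        then have "\<tau> i = a + hh/2" using g1 i unfolding good_def by (auto simp: knot_eq)
        then show ?thesis using fform hz hh_pos by (simp add: poly_gL)
      qed
    qed (use fform in auto)
    then show "\<omega> i * f (\<tau> i) = 0" by simp
  qed
  ultimately show False using hh_pos by simp
qed

lemma right_end: assumes gn: "good n" shows False
proof -
  define c where "c = knot a b n (n - 1)"
  have cb: "c + hh = b" using n1 knot_n unfolding c_def knot_eq by (auto simp: of_nat_diff algebra_simps)
  have b1: "(b - c)/hh = 1" using cb hz by (auto simp: field_simps)
  define P where "P = sc hh c gR"
  define f where "f = (\<lambda>t. poly 0 t + (\<Sum>(c,P)\<leftarrow>[(c, P)]. H c (poly P) t))"
  have fs: "f \<in> spline51 a b n" unfolding f_def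
  proof (rule spline_mem[OF ab n1])
    fix c' P' assume "(c', P') \<in> set [(c, P)]"
    then show "poly P' c' = 0 \<and> poly (pderiv P') c' = 0 \<and> degree P' \<le> 5 \<and> (\<exists>j\<le>n. c' = knot a b n j)"
      using hz gR_vals deg_gR degree_sc[of hh c gR] unfolding P_def
      by (auto simp: poly_sc pderiv_sc c_def intro!: exI[of _ "n - 1"])
  qed simp
  have fform: "f t = (if c \<le> t then poly gR ((t - c)/hh) else 0)" for t
    using hz hh_pos unfolding f_def P_def by (auto simp: H_def poly_sc)
  have ac: "a \<le> c" unfolding c_def knot_eq using hh_pos by simp
  have "(f has_integral hh/240) {a..b}"
  proof (rule int_piece[OF ac _ _ int_gR[OF hh_pos]])
    show "\<forall>t\<in>{a..c}. f t = 0" using fform gR_vals by auto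
    show "\<forall>t\<in>{c..c+hh}. f t = poly (sc hh c gR) t" using fform hz
      by (auto simp: poly_sc)
    show "\<forall>t\<in>{c+hh..b}. f t = 0"
    proof
      fix t assume "t \<in> {c+hh..b}"
      then have "t = b" using cb by auto
      then have "(t - c)/hh = 1" using cb hz by (auto simp: field_simps)
      then show "f t = 0" using fform gR_vals by simp
    qed
  qed (use hh_pos cb in auto)
  then have "(\<Sum>i<2*n+1. \<omega> i * f (\<tau> i)) = hh/240" using exact[OF fs] by (simp add: integral_unique)
  moreover have "(\<Sum>i<2*n+1. \<omega> i * f (\<tau> i)) = 0"
  proof (intro sum.neutral ballI)
    fix i assume "i \<in> {..<2*n+1}"
    then have i: "i < 2*n+1" by simp
    have "f (\<tau> i) = 0"
    proof (cases "c < \<tau> i")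
      case True
      show ?thesis
      proof (cases "\<tau> i = b")
        case True then show ?thesis using fform gR_vals b1 by simp
      next
        case False
        then have "\<tau> i \<in> {knot a b n (n - 1)<..<knot a b n n}"
          using nodes[OF i] True knot_n by (auto simp: c_def)
        then have "\<tau> i = c + hh/2" using gn i unfolding good_def by (auto simp: c_def)
        then show ?thesis using fform hz hh_pos by (simp add: poly_gR)
      qed
    next
      case False then show ?thesis using fform gR_vals by (cases "\<tau> i = c") auto
    qed
    then show "\<omega> i * f (\<tau> i) = 0" by simp
  qed
  ultimately show False using hh_pos by simp
qed

end



context GR begin

lemma propagate:
  assumes j2: "2 \<le> j" and jn: "j + 1 \<le> n" and gj: "good j"
  shows "good (j - 1)"
  unfolding good_def
proof (intro allI impI)
  fix i0 assume i0: "i0 < 2*n+1" "\<tau> i0 \<in> {knot a b n (j - 1 - 1)<..<knot a b n (j - 1)}"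
  define c where "c = knot a b n (j - 2)"
  have k1: "knot a b n (j - 1) = c + hh" using j2 unfolding c_def knot_eq by (auto simp: of_nat_diff algebra_simps)
  have k2: "knot a b n j = c + 2*hh" using j2 unfolding c_def knot_eq by (auto simp: of_nat_diff algebra_simps)
  have k3: "knot a b n (j+1) = c + 3*hh" using j2 unfolding c_def knot_eq by (auto simp: of_nat_diff algebra_simps)
  have ac: "a \<le> c" unfolding c_def knot_eq using hh_pos by simp
  have cb: "c + 3*hh \<le> b" using knot_le_b[OF jn] k3 by simp
  define P1 where "P1 = - sc hh c gR"
  define P2 where "P2 = sc hh (c + hh) g2"
  define P3 where "P3 = - sc hh (c + 2*hh) gL"
  have e1: "(c + hh - c)/hh = 1" "(c - c)/hh = 0" "(c + hh - (c + hh))/hh = 0"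
    "(c + 2*hh - (c + hh))/hh = 1" "(c + 2*hh - (c + 2*hh))/hh = 0" "(c + 3*hh - (c + 2*hh))/hh = 1"
    using hz by (auto simp: field_simps)
  have dg: "degree P1 \<le> 5" "degree P2 \<le> 5" "degree P3 \<le> 5"
    using deg_gR deg_g2 deg_gL degree_sc[of hh c gR] degree_sc[of hh "c+hh" g2] degree_sc[of hh "c+2*hh" gL]
    unfolding P1_def P2_def P3_def by auto
  define L where "L = [(c, P1), (c+hh, P2 - P1), (c+2*hh, P3 - P2), (c+3*hh, -P3)]"
  define f where "f = (\<lambda>t. poly 0 t + (\<Sum>(c,P)\<leftarrow>L. H c (poly P) t))"
  have fs: "f \<in> spline51 a b n" unfolding f_def
  proof (rule spline_mem[OF ab n1])
    fix c' P' assume "(c', P') \<in> set L"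
    then consider "c' = c" "P' = P1" | "c' = c + hh" "P' = P2 - P1" | "c' = c + 2*hh" "P' = P3 - P2"
      | "c' = c + 3*hh" "P' = - P3" unfolding L_def by auto
    then show "poly P' c' = 0 \<and> poly (pderiv P') c' = 0 \<and> degree P' \<le> 5 \<and> (\<exists>j\<le>n. c' = knot a b n j)"
    proof cases
      case 1 then show ?thesis using hz gR_vals dg jn unfolding P1_def
        by (auto simp: poly_sc pderiv_sc pderiv_minus e1 c_def intro!: exI[of _ "j - 2"])
    next
      case 2
      have "degree P' \<le> 5" using 2 dg by (auto intro: order.trans[OF degree_diff_le_max])
      then show ?thesis using 2 hz gR_vals g2_vals jn k1 unfolding P1_def P2_def
        by (auto simp: poly_sc pderiv_sc pderiv_minus pderiv_diff pderiv_add e1 g2_vals gR_vals gL_vals intro!: exI[of _ "j - 1"])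
    next
      case 3
      have "degree P' \<le> 5" using 3 dg by (auto intro: order.trans[OF degree_diff_le_max])
      then show ?thesis using 3 hz gL_vals g2_vals jn k2 unfolding P3_def P2_def
        by (auto simp: poly_sc pderiv_sc pderiv_minus pderiv_diff pderiv_add e1 g2_vals gR_vals gL_vals intro!: exI[of _ j])
    next
      case 4 then show ?thesis using hz gL_vals dg jn k3 unfolding P3_def
        by (auto simp: poly_sc pderiv_sc pderiv_minus e1 intro!: exI[of _ "j + 1"])
    qed
  qed simp
  have v1: "poly P1 t = - poly gR ((t - c)/hh)" "poly P2 t = poly g2 ((t - (c+hh))/hh)"
    "poly P3 t = - poly gL ((t - (c+2*hh))/hh)" for t
    using hz unfolding P1_def P2_def P3_def by (auto simp: poly_sc)
  have z: "poly P1 c = 0" "poly P1 (c+hh) = 0" "poly P2 (c+hh) = 0" "poly P2 (c+2*hh) = 0"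
      "poly P3 (c+2*hh) = 0" "poly P3 (c+3*hh) = 0"
      using gR_vals g2_vals gL_vals by (simp_all add: v1 e1)
  have fform: "f t = (if t \<le> c then 0 else if t \<le> c + hh then poly P1 t
     else if t \<le> c + 2*hh then poly P2 t else if t \<le> c + 3*hh then poly P3 t else 0)" for t
    using hh_pos z unfolding f_def L_def by (auto simp: H_def)
  have p0: "\<forall>t\<in>{a..c}. f t = 0" using fform by auto
  have p1: "\<forall>t\<in>{c..c+hh}. f t = - poly (sc hh c gR) t" using fform z hh_pos
    by (auto simp: P1_def)
  have p2: "\<forall>t\<in>{c+hh..c+hh+hh}. f t = poly (sc hh (c+hh) g2) t" using fform z hh_pos
    by (auto simp: P2_def)
  have p3: "\<forall>t\<in>{c+2*hh..c+2*hh+hh}. f t = - poly (sc hh (c+2*hh) gL) t" using fform z hh_pos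
    by (auto simp: P3_def)
  have p4: "\<forall>t\<in>{c+3*hh..b}. f t = 0" using fform z hh_pos by auto
  have i0': "(f has_integral 0) {a..c}" using p0 has_integral_cong[of "{a..c}" f "\<lambda>_. 0"] by auto
  have i1: "(f has_integral (-(hh/240))) {c..c+hh}"
    using has_integral_neg[OF int_gR[OF hh_pos, of c]] p1
      has_integral_cong[of "{c..c+hh}" f "\<lambda>t. - poly (sc hh c gR) t"] by auto
  have i2: "(f has_integral hh/120) {c+hh..c+hh+hh}"
    using int_g2[OF hh_pos, of "c+hh"] p2
      has_integral_cong[of "{c+hh..c+hh+hh}" f "\<lambda>t. poly (sc hh (c+hh) g2) t"] by auto
  have i3: "(f has_integral (-(hh/240))) {c+2*hh..c+2*hh+hh}"
    using has_integral_neg[OF int_gL[OF hh_pos, of "c+2*hh"]] p3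
      has_integral_cong[of "{c+2*hh..c+2*hh+hh}" f "\<lambda>t. - poly (sc hh (c+2*hh) gL) t"] by auto
  have i4: "(f has_integral 0) {c+3*hh..b}" using p4 has_integral_cong[of "{c+3*hh..b}" f "\<lambda>_. 0"] by auto
  have s1: "(f has_integral 0 + (-(hh/240))) {a..c+hh}"
    by (rule has_integral_combine[OF _ _ i0' i1]) (use ac hh_pos in auto)
  have s2: "(f has_integral 0 + (-(hh/240)) + hh/120) {a..c+hh+hh}"
    by (rule has_integral_combine[OF _ _ s1 i2]) (use ac hh_pos in auto)
  have e2: "c+hh+hh = c+2*hh" by simp
  have s3: "(f has_integral 0 + (-(hh/240)) + hh/120 + (-(hh/240))) {a..c+2*hh+hh}"
    by (rule has_integral_combine[OF _ _ s2[unfolded e2] i3]) (use ac hh_pos in auto)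
  have e3: "c+2*hh+hh = c+3*hh" by simp
  have "(f has_integral 0 + (-(hh/240)) + hh/120 + (-(hh/240)) + 0) {a..b}"
    by (rule has_integral_combine[OF _ _ s3[unfolded e3] i4]) (use ac hh_pos cb in auto)
  then have "(f has_integral 0) {a..b}" by simp
  then have S0: "(\<Sum>i<2*n+1. \<omega> i * f (\<tau> i)) = 0" using exact[OF fs] by (simp add: integral_unique)
  have nonpos: "\<omega> i * f (\<tau> i) \<le> 0" if i: "i < 2*n+1" for i
  proof -
    define t where "t = \<tau> i"
    have "f t \<le> 0"
    proof -
      consider "t \<le> c" | "c < t" "t \<le> c + hh" | "c + hh < t" "t < c + 2*hh" | "t = c + 2*hh"
        | "c + 2*hh < t" "t \<le> c + 3*hh" | "c + 3*hh < t" by linarith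
      then show ?thesis
      proof cases
        case 2
        have "0 \<le> (t - c)/hh" "(t - c)/hh \<le> 1" using 2 hh_pos by (auto simp: field_simps)
        then show ?thesis using 2 fform v1 gR_nonneg by auto
      next
        case 3
        then have "t \<in> {knot a b n (j - 1)<..<knot a b n j}" using k1 k2 by auto
        then have "t = c + hh + hh/2" using gj i k1 unfolding good_def t_def by auto
        then have s: "(t - (c + hh))/hh = 1/2" using hz by (auto simp: field_simps)
        have "f t = poly g2 ((t - (c+hh))/hh)" using 3 fform v1 hh_pos by auto
        then show ?thesis unfolding s by (simp add: poly_g2)
      next
        case 4 then show ?thesis using fform z hh_pos by auto
      next
        case 5
        have "0 \<le> (t - (c+2*hh))/hh" "(t - (c+2*hh))/hh \<le> 1" using 5 hh_pos by (auto simp: field_simps)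
        then show ?thesis using 5 fform v1 gL_nonneg hh_pos by auto
      qed (use fform in auto)
    qed
    then show ?thesis using nodes[OF i] unfolding t_def by (simp add: mult_nonneg_nonpos)
  qed
  have "(\<Sum>i<2*n+1. - (\<omega> i * f (\<tau> i))) = 0" using S0 by (simp add: sum_negf)
  then have "\<forall>i\<in>{..<2*n+1}. - (\<omega> i * f (\<tau> i)) = 0"
    using sum_nonneg_eq_0_iff[of "{..<2*n+1}" "\<lambda>i. - (\<omega> i * f (\<tau> i))"] nonpos by auto
  then have "\<omega> i0 = 0 \<or> f (\<tau> i0) = 0" using i0(1) by auto
  then have "f (\<tau> i0) = 0" using nodes[OF i0(1)] by auto
  moreover have ti: "c < \<tau> i0" "\<tau> i0 < c + hh"
    using i0(2) k1 j2 by (auto simp: c_def numeral_2_eq_2)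
  ultimately have "poly gR ((\<tau> i0 - c)/hh) = 0" using fform v1 by auto
  moreover have "0 < (\<tau> i0 - c)/hh" "(\<tau> i0 - c)/hh < 1" using ti hh_pos by (auto simp: field_simps)
  ultimately have "(\<tau> i0 - c)/hh = 1/2"
  proof -
    define s where "s = (\<tau> i0 - c)/hh"
    assume "poly gR ((\<tau> i0 - c)/hh) = 0" "0 < (\<tau> i0 - c)/hh" "(\<tau> i0 - c)/hh < 1"
    then have "poly gR s = 0" "0 < s" "s < 1" unfolding s_def by auto
    then have "s = 1/2" by (simp add: poly_gR)
    then show ?thesis unfolding s_def .
  qed
  then have "\<tau> i0 = c + hh/2" using hz by (auto simp: field_simps)
  then show "\<tau> i0 = knot a b n (j - 1 - 1) + hh/2" by (simp add: c_def numeral_2_eq_2)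
qed

end

theorem lemma2:
  fixes a b :: real and n :: nat and \<tau> \<omega> :: "nat \<Rightarrow> real"
  assumes "a < b" and "n \<ge> 1"
    and "gaussian_rule51 a b n \<tau> \<omega>"
    and "k \<in> {1..n}"
  shows "card {i. i < 2*n+1 \<and> \<tau> i \<in> {knot a b n (k - 1)<..<knot a b n k}} \<ge> 2"
proof -
  interpret GR a b n \<tau> \<omega> using assms(1-3) by unfold_locales
  show ?thesis
  proof (rule ccontr)
    assume "\<not> ?thesis"
    then have c1: "card {i. i < 2*n+1 \<and> \<tau> i \<in> {knot a b n (k - 1)<..<knot a b n k}} \<le> 1" by simp
    have gk: "good k" by (rule mid[OF assms(4) c1])
    show False
    proof (cases "k = n")
      case True then show False using right_end gk by simp
    next
      case False
      then have kn: "k + 1 \<le> n" using assms(4) by auto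
      have all: "m < k \<longrightarrow> good (k - m)" for m
      proof (induction m)
        case 0 then show ?case using gk by simp
      next
        case (Suc m)
        show ?case
        proof
          assume sk: "Suc m < k"
          then have "good (k - m)" using Suc by simp
          then have "good (k - m - 1)" using propagate[of "k - m"] sk kn by auto
          then show "good (k - Suc m)" by simp
        qed
      qed
      have "k - (k - 1) = 1" using assms(4) by auto
      then have "good 1" using all[of "k - 1"] assms(4) by auto
      then show False using left_end by simp
    qed
  qed
qed

end
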